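(* Let $\beta>0$, $\beta_a>0$, $\alpha>0$. Consider the system \[ \begin{aligned} \dot s_a&=-\beta s_a i, & \dot s_r&=-\beta s_r i,\\ \dot i_a&=\beta s_a i-\beta_a s_a i_a-\alpha i_a, & \dot i_r&=\beta s_r i-\beta_a s_a i_r-\alpha i_r,\\ \dot r&=\beta_a s_a i+\alpha i, && \end{aligned} \] where $i=i_a+i_r$, with initial conditions $(s_a(0),s_r(0),i_a(0),i_r(0))=(s_{a0},s_{r0},i_{a0},i_{r0})\in[0,1]^4$ satisfying $s_{a0}+s_{r0}+i_{a0}+i_{r0}=1$ and $r(0)=0$. Let $i_0=i_{a0}+i_{r0}$ and $s_0=s_{a0}+s_{r0}=1-i_0$. Then the peak infection level $i_{\mathrm{pk}}\triangleq\max_{t\ge 0} i(t)$ satisfies \[ i_{\mathrm{pk}}=\begin{cases} 1-\dfrac{\alpha}{\beta}-\dfrac{\beta_a}{\beta}s_{a0}+\dfrac{\alpha}{\beta}\log\dfrac{\alpha}{\beta s_0-\beta_a s_{a0}}, & \text{if } s_{a0}<\dfrac{\beta s_0-\alpha}{\beta_a},\\[3mm] i_0, & \text{if } s_{a0}\ge \dfrac{\beta s_0-\alpha}{\beta_a}. \end{cases} \]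
   Context: This is the A-SIR active cyber defense model: $s_a,s_r$ are the fractions of susceptible active-defender and susceptible non-active nodes, $i_a,i_r$ the fractions of infected active-defender and infected non-active nodes, and $r$ the fraction of permanently protected (recovered) nodes; $\beta$ is the infection rate, $\beta_a$ the active clean-up rate, $\alpha$ the reactive recovery rate. *)

theory Defs
  imports "HOL-Analysis.Analysis"
begin

end

theory Submission
  imports Defs
begin


lemma deriv_cont:
  fixes f f' :: "real \<Rightarrow> real"
  assumes "\<And>t. t \<ge> 0 \<Longrightarrow> (f has_real_derivative f' t) (at t within {0..})"
  shows "continuous_on {0..} f"
  unfolding continuous_on_eq_continuous_within
  using assms by (meson DERIV_continuous atLeast_iff)

lemma lin_ode:
  fixes y a :: "real \<Rightarrow> real"
  assumes d: "\<And>t. t \<ge> 0 \<Longrightarrow> (y has_real_derivative a t * y t) (at t within {0..})"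
    and c: "continuous_on {0..} a" and t: "t \<ge> 0"
  shows "y t = y 0 * exp (integral {0..t} a)"
proof -
  define f where "f u = y u * exp (- integral {0..u} a)" for u
  have cc: "continuous_on {0..t} a" using c by (rule continuous_on_subset) auto
  have "(f has_real_derivative 0) (at u within {0..t})" if u: "u \<in> {0..t}" for u
  proof -
    have dA: "((\<lambda>x. integral {0..x} a) has_real_derivative a u) (at u within {0..t})"
      using integral_has_real_derivative[OF cc u] .
    have dy: "(y has_real_derivative a u * y u) (at u within {0..t})"
      using d[of u] u by (auto intro: DERIV_subset)
    have dE: "((\<lambda>x. exp (- integral {0..x} a)) has_real_derivative exp (- integral {0..u} a) * (- a u)) (at u within {0..t})"
      by (rule DERIV_chain2[OF DERIV_exp]) (rule DERIV_minus[OF dA])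
    have "(f has_real_derivative (a u * y u) * exp (- integral {0..u} a) + exp (- integral {0..u} a) * (- a u) * y u) (at u within {0..t})"
      unfolding f_def by (rule DERIV_mult[OF dy dE])
    then show ?thesis by (simp add: algebra_simps)
  qed
  then obtain C where "\<forall>x\<in>{0..t}. f x = C"
    using has_field_derivative_zero_constant[of "{0..t}" f] by auto
  then have "f t = f 0" using t by auto
  then show ?thesis by (simp add: f_def exp_minus field_simps)
qed

lemma bound_up:
  fixes \<alpha> K \<beta> e :: real
  assumes "\<alpha> > 0" "K > 0" "\<beta> > 0" "e > 0"
  shows "-(K/\<beta>)*e + (\<alpha>/\<beta>)*ln e \<le> -(\<alpha>/\<beta>) + (\<alpha>/\<beta>)*ln (\<alpha>/K)"
proof -
  have "ln (e*K/\<alpha>) \<le> e*K/\<alpha> - 1" using assms by (intro ln_le_minus_one) simp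
  moreover have "ln (e*K/\<alpha>) = ln e - ln (\<alpha>/K)" using assms by (simp add: ln_div ln_mult)
  ultimately have "ln e - ln (\<alpha>/K) \<le> e*K/\<alpha> - 1" by simp
  then have "\<alpha> * (ln e - ln (\<alpha>/K)) \<le> \<alpha> * (e*K/\<alpha> - 1)" using assms by (intro mult_left_mono) auto
  moreover have "\<alpha> * (e*K/\<alpha> - 1) = e*K - \<alpha>" using assms by (simp add: right_diff_distrib)
  ultimately have "\<alpha> * (ln e - ln (\<alpha>/K)) \<le> e*K - \<alpha>" by simp
  then have "(-K*e + \<alpha>*ln e)/\<beta> \<le> (-\<alpha> + \<alpha>*ln(\<alpha>/K))/\<beta>" using assms
    by (intro divide_right_mono) (auto simp: algebra_simps)
  then show ?thesis by (simp add: add_divide_distrib diff_divide_distrib)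
qed

lemma bound_low:
  fixes \<alpha> K \<beta> e :: real
  assumes "\<alpha> > 0" "K > 0" "\<beta> > 0" "e \<le> 1" "\<alpha>/K \<le> e"
  shows "-(K/\<beta>) \<le> -(K/\<beta>)*e + (\<alpha>/\<beta>)*ln e"
proof -
  have ep: "e > 0" using assms by (smt (verit) divide_pos_pos)
  have "ln (1/e) \<le> 1/e - 1" using ep by (intro ln_le_minus_one) simp
  then have l: "ln e \<ge> 1 - 1/e" using ep by (simp add: ln_div)
  have ke: "K*e \<ge> \<alpha>" using assms by (simp add: pos_divide_le_eq mult.commute)
  have "K*(1-e) + \<alpha>*(1 - 1/e) = (1-e)*(K*e - \<alpha>)/e" using ep by (simp add: field_simps)
  also have "\<dots> \<ge> 0" using ep ke assms by (intro divide_nonneg_pos mult_nonneg_nonneg) auto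
  finally have "0 \<le> K*(1-e) + \<alpha>*(1 - 1/e)" .
  also have "\<dots> \<le> K*(1-e) + \<alpha>*ln e" using l assms by (simp add: mult_left_mono)
  finally have "0 \<le> (K*(1-e) + \<alpha>*ln e)/\<beta>" using assms by simp
  then show ?thesis by (simp add: add_divide_distrib diff_divide_distrib right_diff_distrib)
qed

theorem theorem4:
  fixes \<beta> \<beta>\<^sub>a \<alpha> :: real
    and sa sr ia ir r :: "real \<Rightarrow> real"
    and sa0 sr0 ia0 ir0 :: real
  assumes pos: "\<beta> > 0" "\<beta>\<^sub>a > 0" "\<alpha> > 0"
    and d_sa: "\<And>t. t \<ge> 0 \<Longrightarrow>
      (sa has_real_derivative (- \<beta> * sa t * (ia t + ir t))) (at t within {0..})"
    and d_sr: "\<And>t. t \<ge> 0 \<Longrightarrow>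
      (sr has_real_derivative (- \<beta> * sr t * (ia t + ir t))) (at t within {0..})"
    and d_ia: "\<And>t. t \<ge> 0 \<Longrightarrow>
      (ia has_real_derivative (\<beta> * sa t * (ia t + ir t) - \<beta>\<^sub>a * sa t * ia t - \<alpha> * ia t))
        (at t within {0..})"
    and d_ir: "\<And>t. t \<ge> 0 \<Longrightarrow>
      (ir has_real_derivative (\<beta> * sr t * (ia t + ir t) - \<beta>\<^sub>a * sa t * ir t - \<alpha> * ir t))
        (at t within {0..})"
    and d_r: "\<And>t. t \<ge> 0 \<Longrightarrow>
      (r has_real_derivative (\<beta>\<^sub>a * sa t * (ia t + ir t) + \<alpha> * (ia t + ir t)))
        (at t within {0..})"
    and init: "sa 0 = sa0" "sr 0 = sr0" "ia 0 = ia0" "ir 0 = ir0" "r 0 = 0"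
    and range: "sa0 \<in> {0..1}" "sr0 \<in> {0..1}" "ia0 \<in> {0..1}" "ir0 \<in> {0..1}"
    and total: "sa0 + sr0 + ia0 + ir0 = 1"
    and nontriv: "ia0 + ir0 > 0"
  shows "let i0 = ia0 + ir0; s0 = sa0 + sr0;
             ipk = (if sa0 < (\<beta> * s0 - \<alpha>) / \<beta>\<^sub>a
                    then 1 - \<alpha> / \<beta> - (\<beta>\<^sub>a / \<beta>) * sa0
                         + (\<alpha> / \<beta>) * ln (\<alpha> / (\<beta> * s0 - \<beta>\<^sub>a * sa0))
                    else i0)
         in (\<exists>t\<ge>0. ia t + ir t = ipk) \<and> (\<forall>t\<ge>0. ia t + ir t \<le> ipk)"
proof -
  define i where "i = (\<lambda>t. ia t + ir t)"
  define s where "s = (\<lambda>t. sa t + sr t)"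
  define S0 where "S0 = sa0 + sr0"
  define I0 where "I0 = ia0 + ir0"
  have i0: "i 0 = I0" and s0: "s 0 = S0" using init by (simp_all add: i_def s_def I0_def S0_def)
  have I0pos: "I0 > 0" using nontriv by (simp add: I0_def)
  have tot: "I0 + S0 = 1" using total by (simp add: I0_def S0_def)
  have di: "(i has_real_derivative (\<beta> * s t - \<beta>\<^sub>a * sa t - \<alpha>) * i t) (at t within {0..})"
    if t: "t \<ge> 0" for t
    unfolding i_def by (rule DERIV_cong[OF DERIV_add[OF d_ia[OF t] d_ir[OF t]]]) (simp add: s_def algebra_simps)
  have ds: "(s has_real_derivative (- \<beta> * i t) * s t) (at t within {0..})"
    if t: "t \<ge> 0" for t
    unfolding s_def by (rule DERIV_cong[OF DERIV_add[OF d_sa[OF t] d_sr[OF t]]]) (simp add: i_def algebra_simps)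
  have dsa: "(sa has_real_derivative (- \<beta> * i t) * sa t) (at t within {0..})"
    if t: "t \<ge> 0" for t
    by (rule DERIV_cong[OF d_sa[OF t]]) (simp add: i_def algebra_simps)
  have ci: "continuous_on {0..} i" by (rule deriv_cont[OF di])
  have cs: "continuous_on {0..} s" by (rule deriv_cont[OF ds])
  have csa: "continuous_on {0..} sa" by (rule deriv_cont[OF dsa])
  have cJ: "continuous_on {0..} (\<lambda>t. - \<beta> * i t)" by (intro continuous_intros ci)
  have cg: "continuous_on {0..} (\<lambda>t. \<beta> * s t - \<beta>\<^sub>a * sa t - \<alpha>)" by (intro continuous_intros cs csa)
  define J where "J t = integral {0..t} (\<lambda>u. - \<beta> * i u)" for t
  define E where "E t = exp (J t)" for t
  have s_eq: "s t = S0 * E t" if "t \<ge> 0" for t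
    using lin_ode[OF ds cJ that] s0 by (simp add: E_def J_def)
  have sa_eq: "sa t = sa0 * E t" if "t \<ge> 0" for t
    using lin_ode[OF dsa cJ that] init by (simp add: E_def J_def)
  have i_eq: "i t = I0 * exp (integral {0..t} (\<lambda>t. \<beta> * s t - \<beta>\<^sub>a * sa t - \<alpha>))" if "t \<ge> 0" for t
    using lin_ode[OF di cg that] i0 by simp
  have i_pos: "i t > 0" if "t \<ge> 0" for t using i_eq[OF that] I0pos by simp
  have ci': "continuous_on {0..t} i" for t using ci by (rule continuous_on_subset) auto
  have J_le: "J t \<le> - \<beta> * c * t" if t: "t \<ge> 0" and c: "\<And>u. u \<in> {0..t} \<Longrightarrow> c \<le> i u" for t c
  proof -
    have "J t \<le> integral {0..t} (\<lambda>u. - \<beta> * c)" unfolding J_def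
      by (rule integral_le) (auto intro!: integrable_continuous_interval continuous_intros ci' c
          simp: pos)
    also have "\<dots> = - \<beta> * c * t" using t by simp
    finally show ?thesis .
  qed
  have J_nonpos: "J t \<le> 0" if t: "t \<ge> 0" for t
    using J_le[OF t, of 0] i_pos by (simp add: less_imp_le)
  have E_pos: "E t > 0" for t by (simp add: E_def)
  have E_le1: "E t \<le> 1" if "t \<ge> 0" for t using J_nonpos[OF that] by (simp add: E_def)
  have E0: "E 0 = 1" by (simp add: E_def J_def)
  have sa0ge: "sa0 \<ge> 0" using range by simp
  have main: "(\<exists>t\<ge>0. i t = (if sa0 < (\<beta> * S0 - \<alpha>) / \<beta>\<^sub>a
                    then 1 - \<alpha> / \<beta> - (\<beta>\<^sub>a / \<beta>) * sa0
                         + (\<alpha> / \<beta>) * ln (\<alpha> / (\<beta> * S0 - \<beta>\<^sub>a * sa0))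
                    else I0)) \<and> (\<forall>t\<ge>0. i t \<le> (if sa0 < (\<beta> * S0 - \<alpha>) / \<beta>\<^sub>a
                    then 1 - \<alpha> / \<beta> - (\<beta>\<^sub>a / \<beta>) * sa0
                         + (\<alpha> / \<beta>) * ln (\<alpha> / (\<beta> * S0 - \<beta>\<^sub>a * sa0))
                    else I0))"
  proof (cases "sa0 < (\<beta> * S0 - \<alpha>) / \<beta>\<^sub>a")
    case False
    then have X: "\<beta> * S0 - \<beta>\<^sub>a * sa0 \<le> \<alpha>" using pos by (simp add: not_less pos_divide_le_eq mult.commute)
    have "i t \<le> I0" if t: "t \<ge> 0" for t
    proof -
      have "integral {0..t} (\<lambda>t. \<beta> * s t - \<beta>\<^sub>a * sa t - \<alpha>) \<le> integral {0..t} (\<lambda>t. 0)"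
      proof (rule integral_le)
        show "(\<lambda>t. \<beta> * s t - \<beta>\<^sub>a * sa t - \<alpha>) integrable_on {0..t}"
          by (rule integrable_continuous_interval, rule continuous_on_subset[OF cg]) auto
        fix u assume u: "u \<in> {0..t}"
        then have u0: "u \<ge> 0" by simp
        have "\<beta> * s u - \<beta>\<^sub>a * sa u - \<alpha> = E u * (\<beta> * S0 - \<beta>\<^sub>a * sa0) - \<alpha>"
          using s_eq[OF u0] sa_eq[OF u0] by (simp add: algebra_simps)
        also have "\<dots> \<le> 0"
        proof (cases "\<beta> * S0 - \<beta>\<^sub>a * sa0 \<le> 0")
          case True then show ?thesis using E_pos[of u] pos
            by (smt (verit) mult_pos_neg zero_less_mult_iff)
        next
          case False
          then have "E u * (\<beta> * S0 - \<beta>\<^sub>a * sa0) \<le> 1 * (\<beta> * S0 - \<beta>\<^sub>a * sa0)"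
            using E_le1[OF u0] by (intro mult_right_mono) auto
          then show ?thesis using X by simp
        qed
        finally show "\<beta> * s u - \<beta>\<^sub>a * sa u - \<alpha> \<le> 0" .
      qed auto
      then show ?thesis using i_eq[OF t] I0pos by simp
    qed
    moreover have "i 0 = I0" by (rule i0)
    ultimately show ?thesis using False by auto
  next
    case True
    define K where "K = \<beta> * S0 - \<beta>\<^sub>a * sa0"
    have KA: "K > \<alpha>" using True pos by (simp add: K_def less_divide_eq mult.commute)
    have Kpos: "K > 0" using KA pos by simp
    have S0pos: "S0 > 0"
    proof -
      have "\<beta> * S0 > 0" using KA pos sa0ge unfolding K_def
        by (smt (verit) mult_nonneg_nonneg)
      then show ?thesis using pos by (simp add: zero_less_mult_iff)
    qed
    have s_pos: "s t > 0" if "t \<ge> 0" for t using s_eq[OF that] S0pos E_pos[of t] by simp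
    define \<Phi> where "\<Phi> t = i t + s t - (\<beta>\<^sub>a/\<beta>) * sa t - (\<alpha>/\<beta>) * ln (s t)" for t
    have dPhi: "(\<Phi> has_real_derivative 0) (at t within {0..})" if t: "t \<in> {0..}" for t
    proof -
      have t0: "t \<ge> 0" using t by simp
      have dl: "((\<lambda>x. ln (s x)) has_real_derivative (1 / s t) * ((- \<beta> * i t) * s t)) (at t within {0..})"
        by (rule DERIV_chain2[OF DERIV_ln_divide[OF s_pos[OF t0]] ds[OF t0]])
      have "(\<Phi> has_real_derivative ((\<beta> * s t - \<beta>\<^sub>a * sa t - \<alpha>) * i t + (- \<beta> * i t) * s t
          - (\<beta>\<^sub>a/\<beta>) * ((- \<beta> * i t) * sa t) - (\<alpha>/\<beta>) * ((1 / s t) * ((- \<beta> * i t) * s t))))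
          (at t within {0..})"
        unfolding \<Phi>_def[abs_def]
        by (intro DERIV_diff DERIV_add DERIV_cmult di[OF t0] ds[OF t0] dsa[OF t0] dl)
      moreover have "(\<beta> * s t - \<beta>\<^sub>a * sa t - \<alpha>) * i t + (- \<beta> * i t) * s t
          - (\<beta>\<^sub>a/\<beta>) * ((- \<beta> * i t) * sa t) - (\<alpha>/\<beta>) * ((1 / s t) * ((- \<beta> * i t) * s t)) = 0"
        using s_pos[OF t0] pos by (simp add: field_simps)
      ultimately show ?thesis by simp
    qed
    obtain C where C: "\<forall>x\<in>{0..}. \<Phi> x = C"
      using has_field_derivative_zero_constant[OF convex_real_interval(1) dPhi] by blast
    have i_H: "i t = 1 - (\<beta>\<^sub>a/\<beta>) * sa0 - (K/\<beta>) * E t + (\<alpha>/\<beta>) * J t" if t: "t \<ge> 0" for t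
    proof -
      have "\<Phi> t = \<Phi> 0" using C t by auto
      moreover have "ln (s t) = ln S0 + J t" using s_eq[OF t] S0pos E_pos[of t]
        by (simp add: ln_mult E_def)
      moreover have "s 0 = S0" "sa 0 = sa0" using s0 init by auto
      ultimately have "i t + S0 * E t - (\<beta>\<^sub>a/\<beta>) * (sa0 * E t) - (\<alpha>/\<beta>) * (ln S0 + J t)
          = I0 + S0 - (\<beta>\<^sub>a/\<beta>) * sa0 - (\<alpha>/\<beta>) * ln S0"
        unfolding \<Phi>_def using s_eq[OF t] sa_eq[OF t] i0 by simp
      then show ?thesis using tot pos unfolding K_def by (simp add: field_simps)
    qed
    define Es where "Es = \<alpha> / K"
    have Es_pos: "Es > 0" and Es_lt1: "Es < 1" using KA pos Kpos by (auto simp: Es_def)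
    have ipk: "1 - \<alpha> / \<beta> - (\<beta>\<^sub>a / \<beta>) * sa0 + (\<alpha> / \<beta>) * ln (\<alpha> / (\<beta> * S0 - \<beta>\<^sub>a * sa0))
        = 1 - (\<beta>\<^sub>a/\<beta>) * sa0 + (-(\<alpha>/\<beta>) + (\<alpha>/\<beta>) * ln (\<alpha>/K))"
      by (simp add: K_def)
    have upper: "i t \<le> 1 - \<alpha> / \<beta> - (\<beta>\<^sub>a / \<beta>) * sa0 + (\<alpha> / \<beta>) * ln (\<alpha> / (\<beta> * S0 - \<beta>\<^sub>a * sa0))"
      if t: "t \<ge> 0" for t
    proof -
      have "J t = ln (E t)" by (simp add: E_def)
      then have "i t = 1 - (\<beta>\<^sub>a/\<beta>) * sa0 + (-(K/\<beta>) * E t + (\<alpha>/\<beta>) * ln (E t))"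
        using i_H[OF t] by simp
      also have "\<dots> \<le> 1 - (\<beta>\<^sub>a/\<beta>) * sa0 + (-(\<alpha>/\<beta>) + (\<alpha>/\<beta>) * ln (\<alpha>/K))"
        using bound_up[OF pos(3) Kpos pos(1) E_pos[of t]] by simp
      finally show ?thesis using ipk by linarith
    qed
    have exE: "\<exists>t\<ge>0. E t \<le> Es"
    proof (rule ccontr)
      assume "\<not> ?thesis"
      then have gt: "E t > Es" if "t \<ge> 0" for t using that by (metis not_le)
      have ige: "I0 \<le> i t" if t: "t \<ge> 0" for t
      proof -
        have "J t = ln (E t)" by (simp add: E_def)
        then have "i t = 1 - (\<beta>\<^sub>a/\<beta>) * sa0 + (-(K/\<beta>) * E t + (\<alpha>/\<beta>) * ln (E t))"
          using i_H[OF t] by simp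
        also have "\<dots> \<ge> 1 - (\<beta>\<^sub>a/\<beta>) * sa0 + (-(K/\<beta>))"
          using bound_low[OF pos(3) Kpos pos(1) E_le1[OF t]] gt[OF t] by (simp add: Es_def)
        finally have "i t \<ge> 1 - (\<beta>\<^sub>a/\<beta>) * sa0 - K/\<beta>" by simp
        moreover have "1 - (\<beta>\<^sub>a/\<beta>) * sa0 - K/\<beta> = I0" using tot pos unfolding K_def
          by (simp add: field_simps) (metis distrib_right mult_1 tot)
        ultimately show ?thesis by simp
      qed
      define T where "T = - ln Es / (\<beta> * I0)"
      have T0: "T \<ge> 0" using Es_pos Es_lt1 pos I0pos unfolding T_def
        by (intro divide_nonneg_pos) auto
      have "J T \<le> - \<beta> * I0 * T" using J_le[OF T0, of I0] ige by auto
      also have "\<dots> = ln Es" using pos I0pos unfolding T_def by simp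
      finally have "E T \<le> Es" using Es_pos unfolding E_def by (metis exp_le_cancel_iff exp_ln)
      then show False using gt[OF T0] by simp
    qed
    then obtain t where t: "t \<ge> 0" "E t \<le> Es" by blast
    have cJt: "continuous_on {0..t} J"
      unfolding continuous_on_eq_continuous_within J_def
    proof
      fix x assume x: "x \<in> {0..t}"
      have "continuous_on {0..t} (\<lambda>u. - \<beta> * i u)" by (intro continuous_intros ci')
      from integral_has_real_derivative[OF this x] show
        "continuous (at x within {0..t}) (\<lambda>x. integral {0..x} (\<lambda>u. - \<beta> * i u))"
        by (rule DERIV_continuous)
    qed
    have cE: "continuous_on {0..t} E" unfolding E_def[abs_def] by (intro continuous_intros cJt)
    obtain u where u: "0 \<le> u" "u \<le> t" "E u = Es"
      using IVT2'[of E t Es 0, OF t(2) _ t(1) cE] E0 Es_lt1 by auto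
    have "i u = 1 - (\<beta>\<^sub>a/\<beta>) * sa0 + (-(K/\<beta>) * E u + (\<alpha>/\<beta>) * ln (E u))"
      using i_H[OF u(1)] by (simp add: E_def)
    also have "\<dots> = 1 - (\<beta>\<^sub>a/\<beta>) * sa0 + (-(\<alpha>/\<beta>) + (\<alpha>/\<beta>) * ln (\<alpha>/K))"
      using u(3) Kpos by (simp add: Es_def)
    finally have "i u = 1 - \<alpha> / \<beta> - (\<beta>\<^sub>a / \<beta>) * sa0 + (\<alpha> / \<beta>) * ln (\<alpha> / (\<beta> * S0 - \<beta>\<^sub>a * sa0))"
      using ipk by linarith
    then show ?thesis using True upper u(1) by auto
  qed
  then show ?thesis unfolding Let_def i_def S0_def I0_def by simp
qed

end
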